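(* Let $S\ge 1$ and $N^{\min}\ge 1$ be integers, and let $Q$ be a range query over dimensions $D^Q$ with $m=|D^Q|\ge 1$. Let $T$ be a table stored as clusters, and let $T'$ be obtained from $T$ by inserting a single row into one of its clusters. Assume every cluster of $T$ and of $T'$ has at most $S$ rows, and that $N^Q(T)\ge N^{\min}$. Then $$\bigl|\mathrm{Avg}_Q(T)-\mathrm{Avg}_Q(T')\bigr|\le \max\Bigl(\frac{\Delta_R}{N^{\min}},\ \frac{1}{N^{\min}+1}\Bigr),\qquad \text{where }\Delta_R=1-\Bigl(1-\tfrac1S\Bigr)^{m}.$$
   Context: A table is a finite multiset of rows; each row assigns a value to every dimension in a finite set $D$ of dimensions, each with a totally ordered domain. The table is stored as a set of clusters (disjoint sub-multisets of rows), each containing at most $S$ rows, where $S$ is a fixed positive integer (the cluster size). A range query $Q$ is given by a nonempty set $D^Q\subseteq D$ of dimensions and, for each $d\in D^Q$, an interval $[l_d,u_d]$. A row matches $Q$ if its value on each $d\in D^Q$ lies in $[l_d,u_d]$. For a cluster $C$ and $d\in D^Q$, define $R^d(C)=|\{r\in C: l_d\le r_d\le u_d\}|/S$, and define $R(C)=\prod_{d\in D^Q}R^d(C)$. For a nonempty cluster $C$ and a dimension $d$, let $v^d_{\min}(C)$ and $v^d_{\max}(C)$ be the minimum and maximum value of $d$ among the rows of $C$. The set $C^Q(T)$ of clusters covering $Q$ consists of the clusters $C$ of $T$ such that $[v^d_{\min}(C),v^d_{\max}(C)]\cap[l_d,u_d]\neq\emptyset$ for every $d\in D^Q$. Let $N^Q(T)=|C^Q(T)|$,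 and, when $N^Q(T)\ge1$, define $$\mathrm{Avg}_Q(T)=\frac{1}{N^Q(T)}\sum_{C\in C^Q(T)}R(C).$$ *)

theory Defs
  imports Complex_Main "HOL-Library.Multiset"
begin

text \<open>A table is a finite indexed family of clusters
(index set I, clusters C i). A range query is given by a set DQ of dimensions and
lower/upper bounds l d, u d.\<close>

definition Rd :: "nat \<Rightarrow> ('d \<Rightarrow> 'v::linorder) \<Rightarrow> ('d \<Rightarrow> 'v) \<Rightarrow> 'd \<Rightarrow> ('d \<Rightarrow> 'v) multiset \<Rightarrow> real" where
  "Rd S l u d C = real (size (filter_mset (\<lambda>r. l d \<le> r d \<and> r d \<le> u d) C)) / real S"

definition Rq :: "nat \<Rightarrow> 'd set \<Rightarrow> ('d \<Rightarrow> 'v::linorder) \<Rightarrow> ('d \<Rightarrow> 'v) \<Rightarrow> ('d \<Rightarrow> 'v) multiset \<Rightarrow> real" where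
  "Rq S DQ l u C = (\<Prod>d\<in>DQ. Rd S l u d C)"

definition vmin :: "'d \<Rightarrow> ('d \<Rightarrow> 'v::linorder) multiset \<Rightarrow> 'v" where
  "vmin d C = Min ((\<lambda>r. r d) ` set_mset C)"

definition vmax :: "'d \<Rightarrow> ('d \<Rightarrow> 'v::linorder) multiset \<Rightarrow> 'v" where
  "vmax d C = Max ((\<lambda>r. r d) ` set_mset C)"

definition covers :: "'d set \<Rightarrow> ('d \<Rightarrow> 'v::linorder) \<Rightarrow> ('d \<Rightarrow> 'v) \<Rightarrow> ('d \<Rightarrow> 'v) multiset \<Rightarrow> bool" where
  "covers DQ l u C \<longleftrightarrow> C \<noteq> {#} \<and>
     (\<forall>d\<in>DQ. {vmin d C .. vmax d C} \<inter> {l d .. u d} \<noteq> {})"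

definition coverSet :: "'i set \<Rightarrow> ('i \<Rightarrow> ('d \<Rightarrow> 'v::linorder) multiset) \<Rightarrow> 'd set \<Rightarrow> ('d \<Rightarrow> 'v) \<Rightarrow> ('d \<Rightarrow> 'v) \<Rightarrow> 'i set" where
  "coverSet I C DQ l u = {i \<in> I. covers DQ l u (C i)}"

definition NQ :: "'i set \<Rightarrow> ('i \<Rightarrow> ('d \<Rightarrow> 'v::linorder) multiset) \<Rightarrow> 'd set \<Rightarrow> ('d \<Rightarrow> 'v) \<Rightarrow> ('d \<Rightarrow> 'v) \<Rightarrow> nat" where
  "NQ I C DQ l u = card (coverSet I C DQ l u)"

definition AvgQ :: "nat \<Rightarrow> 'i set \<Rightarrow> ('i \<Rightarrow> ('d \<Rightarrow> 'v::linorder) multiset) \<Rightarrow> 'd set \<Rightarrow> ('d \<Rightarrow> 'v) \<Rightarrow> ('d \<Rightarrow> 'v) \<Rightarrow> real" where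
  "AvgQ S I C DQ l u = (\<Sum>i\<in>coverSet I C DQ l u. Rq S DQ l u (C i)) / real (NQ I C DQ l u)"

end

theory Submission
  imports Defs
begin

lemma prod_diff_bound:
  fixes a e :: "'d \<Rightarrow> real"
  assumes "finite A" "0 \<le> t" "t \<le> 1" "\<forall>d\<in>A. 0 \<le> a d \<and> 0 \<le> e d \<and> e d \<le> t \<and> a d + e d \<le> 1"
  shows "0 \<le> (\<Prod>d\<in>A. a d) \<and> (\<Prod>d\<in>A. a d) \<le> (\<Prod>d\<in>A. a d + e d) \<and> (\<Prod>d\<in>A. a d + e d) \<le> 1
     \<and> (\<Prod>d\<in>A. a d + e d) - (\<Prod>d\<in>A. a d) \<le> 1 - (1-t)^card A"
  using assms(1,4)
proof (induction A rule: finite_induct)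
  case empty
  then show ?case by simp
next
  case (insert x F)
  define P where "P = (\<Prod>d\<in>F. a d + e d)"
  define Q where "Q = (\<Prod>d\<in>F. a d)"
  have IH: "0 \<le> Q" "Q \<le> P" "P \<le> 1" "P - Q \<le> 1 - (1-t)^card F"
    using insert by (auto simp: P_def Q_def)
  have ax: "0 \<le> a x" "0 \<le> e x" "e x \<le> t" "a x + e x \<le> 1" using insert by auto
  have P0: "0 \<le> P" using IH by linarith
  have g1: "0 \<le> a x * Q" using IH ax by simp
  have g2: "a x * Q \<le> (a x + e x) * P"
  proof -
    have "a x * Q \<le> a x * P" using IH ax by (simp add: mult_left_mono)
    also have "\<dots> \<le> (a x + e x) * P" using P0 ax by (simp add: mult_right_mono)
    finally show ?thesis .
  qed
  have g3: "(a x + e x) * P \<le> 1" using ax IH P0 by (simp add: mult_le_one)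
  have pt: "0 \<le> (1-t)^card F" using assms(3) by simp
  have g4: "(a x + e x) * P - a x * Q \<le> 1 - (1-t)^Suc (card F)"
  proof -
    have e1: "(a x + e x) * P - a x * Q = a x * (P - Q) + e x * P" by (simp add: algebra_simps)
    have s1: "a x * (P - Q) \<le> (1 - e x) * (P - Q)" using IH ax by (intro mult_right_mono) auto
    have s2: "e x * P \<le> e x" using ax IH by (simp add: mult_left_le)
    have s3: "(1 - e x) * (P - Q) \<le> (1 - e x) * (1 - (1-t)^card F)" using IH ax by (intro mult_left_mono) auto
    have s4: "(1-t) * (1-t)^card F \<le> (1 - e x) * (1-t)^card F" using ax pt by (intro mult_right_mono) auto
    show ?thesis using e1 s1 s2 s3 s4 by (simp add: algebra_simps)
  qed
  show ?case using insert g1 g2 g3 g4 by (simp add: P_def Q_def)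
qed

lemma covers_mono:
  assumes "covers DQ l u C0"
  shows "covers DQ l u (add_mset r C0)"
proof -
  have ne: "C0 \<noteq> {#}" using assms by (simp add: covers_def)
  have fin: "\<And>d. finite ((\<lambda>r. r d) ` set_mset C0)" by simp
  have nes: "\<And>d. (\<lambda>r. r d) ` set_mset C0 \<noteq> {}" using ne by simp
  have mn: "vmin d (add_mset r C0) \<le> vmin d C0" for d
    using Min_insert[OF fin nes] by (simp add: vmin_def)
  have mx: "vmax d C0 \<le> vmax d (add_mset r C0)" for d
    using Max_insert[OF fin nes] by (simp add: vmax_def)
  have "{vmin d (add_mset r C0) .. vmax d (add_mset r C0)} \<inter> {l d .. u d} \<noteq> {}" if "d \<in> DQ" for d
  proof -
    from assms that obtain x where "x \<in> {vmin d C0 .. vmax d C0}" "x \<in> {l d .. u d}"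
      unfolding covers_def by blast
    then have "x \<in> {vmin d (add_mset r C0) .. vmax d (add_mset r C0)}"
      using mn[of d] mx[of d] by auto
    then show ?thesis using \<open>x \<in> {l d .. u d}\<close> by blast
  qed
  then show ?thesis by (simp add: covers_def)
qed

lemma Rd_bounds:
  assumes "S \<ge> 1" "size C \<le> S"
  shows "0 \<le> Rd S l u d C \<and> Rd S l u d C \<le> 1"
proof -
  have "size (filter_mset (\<lambda>r. l d \<le> r d \<and> r d \<le> u d) C) \<le> S"
    using assms(2) size_filter_mset_lesseq order_trans by blast
  then show ?thesis using assms by (simp add: Rd_def)
qed

lemma Rq_bounds:
  assumes "S \<ge> 1" "size C \<le> S"
  shows "0 \<le> Rq S DQ l u C \<and> Rq S DQ l u C \<le> 1"
  using Rd_bounds[OF assms] by (simp add: Rq_def prod_nonneg prod_le_1)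

lemma Rd_add:
  "Rd S l u d (add_mset r C) = Rd S l u d C + (if l d \<le> r d \<and> r d \<le> u d then 1 / real S else 0)"
  by (simp add: Rd_def add_divide_distrib)

theorem mainTheorem2:
  fixes S Nmin :: nat
    and D DQ :: "'d set"
    and l u :: "'d \<Rightarrow> 'v::linorder"
    and I :: "'i set"
    and C :: "'i \<Rightarrow> ('d \<Rightarrow> 'v) multiset"
    and i0 :: 'i
    and r :: "'d \<Rightarrow> 'v"
  assumes "S \<ge> 1" and "Nmin \<ge> 1"
    and "finite D" and "DQ \<subseteq> D" and "DQ \<noteq> {}"
    and "finite I" and "i0 \<in> I"
    and "\<forall>i\<in>I. size (C i) \<le> S"
    and "\<forall>i\<in>I. size ((C(i0 := add_mset r (C i0))) i) \<le> S"
    and "NQ I C DQ l u \<ge> Nmin"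
  shows "\<bar>AvgQ S I C DQ l u - AvgQ S I (C(i0 := add_mset r (C i0))) DQ l u\<bar>
           \<le> max ((1 - (1 - 1 / real S) ^ card DQ) / real Nmin) (1 / (real Nmin + 1))"
proof -
  define C' where "C' = C(i0 := add_mset r (C i0))"
  define CS where "CS = coverSet I C DQ l u"
  define CS' where "CS' = coverSet I C' DQ l u"
  define N where "N = card CS"
  define f where "f = (\<lambda>i. Rq S DQ l u (C i))"
  define f' where "f' = (\<lambda>i. Rq S DQ l u (C' i))"
  define B where "B = (1 - (1 - 1 / real S) ^ card DQ)"
  have finDQ: "finite DQ" using assms(3,4) finite_subset by blast
  have finCS: "finite CS" using assms(6) by (simp add: CS_def coverSet_def)
  have NN: "real N \<ge> real Nmin" using assms(10) by (simp add: N_def CS_def NQ_def)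
  have Npos: "real N \<ge> 1" using NN assms(2) by linarith
  have S1: "0 \<le> 1 / real S" "1 / real S \<le> 1" using assms(1) by auto
  have B0: "0 \<le> B" unfolding B_def using S1 by (simp add: power_le_one)
  have fb: "\<And>i. i \<in> I \<Longrightarrow> 0 \<le> f i \<and> f i \<le> 1" unfolding f_def using Rq_bounds assms(1,8) by blast
  have fb': "\<And>i. i \<in> I \<Longrightarrow> 0 \<le> f' i \<and> f' i \<le> 1" unfolding f'_def C'_def using Rq_bounds assms(1,9) by blast
  have CSI: "CS \<subseteq> I" "CS' \<subseteq> I" by (auto simp: CS_def CS'_def coverSet_def)
  have same: "CS - {i0} = CS' - {i0}" by (auto simp: CS_def CS'_def coverSet_def C'_def)
  have ff: "\<And>i. i \<noteq> i0 \<Longrightarrow> f' i = f i" by (simp add: f_def f'_def C'_def)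
  have avg: "AvgQ S I C DQ l u = sum f CS / real N"
    by (simp add: AvgQ_def f_def CS_def N_def NQ_def)
  have avg': "AvgQ S I C' DQ l u = sum f' CS' / real (card CS')"
    by (simp add: AvgQ_def f'_def CS'_def NQ_def)
  have mono: "i0 \<in> CS \<Longrightarrow> i0 \<in> CS'"
    using covers_mono assms(7) by (auto simp: CS_def CS'_def coverSet_def C'_def)
  have sumrest: "sum f' (CS - {i0}) = sum f (CS - {i0})" using ff by (intro sum.cong) auto
  have s0: "0 \<le> sum f CS" using fb CSI by (intro sum_nonneg) auto
  have s1: "sum f CS \<le> real N" using fb CSI sum_mono[of CS f "\<lambda>_. 1"] by (auto simp: N_def)
  have goal: "\<bar>sum f CS / real N - sum f' CS' / real (card CS')\<bar> \<le> max (B / real Nmin) (1 / (real Nmin + 1))"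
  proof (cases "i0 \<in> CS")
    case True
    then have T': "i0 \<in> CS'" using mono by blast
    have eq: "CS' = CS" using same True T' by blast
    have d1: "sum f CS = f i0 + sum f (CS - {i0})" using sum.remove[OF finCS True] .
    have d2: "sum f' CS = f' i0 + sum f (CS - {i0})" using sum.remove[OF finCS True, of f'] sumrest by simp
    have key: "\<bar>f i0 - f' i0\<bar> \<le> B"
    proof -
      define a where "a = (\<lambda>d. Rd S l u d (C i0))"
      define e where "e = (\<lambda>d. if l d \<le> r d \<and> r d \<le> u d then 1 / real S else (0::real))"
      have sz1: "size (C i0) \<le> S" using assms(7,8) by blast
      have sz2: "size (add_mset r (C i0)) \<le> S" using assms(7,9) by force
      have "\<forall>d\<in>DQ. 0 \<le> a d \<and> 0 \<le> e d \<and> e d \<le> 1 / real S \<and> a d + e d \<le> 1"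
      proof
        fix d
        have h1: "0 \<le> a d" using Rd_bounds[OF assms(1) sz1] by (simp add: a_def)
        have h2: "a d + e d \<le> 1" using Rd_bounds[OF assms(1) sz2, of l u d] Rd_add[of S l u d r "C i0"]
          by (simp add: a_def e_def)
        have h3: "0 \<le> e d \<and> e d \<le> 1 / real S" using S1 by (simp add: e_def)
        show "0 \<le> a d \<and> 0 \<le> e d \<and> e d \<le> 1 / real S \<and> a d + e d \<le> 1" using h1 h2 h3 by simp
      qed
      from prod_diff_bound[OF finDQ S1 this]
      have h: "0 \<le> (\<Prod>d\<in>DQ. a d) \<and> (\<Prod>d\<in>DQ. a d) \<le> (\<Prod>d\<in>DQ. a d + e d) \<and>
        (\<Prod>d\<in>DQ. a d + e d) - (\<Prod>d\<in>DQ. a d) \<le> B" by (simp add: B_def)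
      have "f i0 = (\<Prod>d\<in>DQ. a d)" by (simp add: f_def Rq_def a_def)
      moreover have "f' i0 = (\<Prod>d\<in>DQ. a d + e d)"
        by (simp add: f'_def C'_def Rq_def a_def e_def Rd_add)
      ultimately show ?thesis using h by linarith
    qed
    have "\<bar>sum f CS / real N - sum f' CS' / real (card CS')\<bar> = \<bar>f i0 - f' i0\<bar> / real N"
      using d1 d2 eq Npos by (simp add: N_def diff_divide_distrib[symmetric])
    also have "\<dots> \<le> B / real N" using key Npos by (simp add: divide_right_mono)
    also have "\<dots> \<le> B / real Nmin" using NN B0 assms(2) by (simp add: divide_left_mono)
    finally show ?thesis by simp
  next
    case False
    show ?thesis
    proof (cases "i0 \<in> CS'")
      case False2: True
      have eq: "CS' = insert i0 CS" using same False False2 by blast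
      have cn: "card CS' = N + 1" using eq False finCS by (simp add: N_def)
      have sm: "sum f' CS' = f' i0 + sum f CS"
      proof -
        have "sum f' CS' = f' i0 + sum f' CS" using eq False finCS by simp
        moreover have "sum f' CS = sum f CS" by (rule sum.cong[OF refl], rule ff) (use False in blast)
        ultimately show ?thesis by simp
      qed
      define s where "s = sum f CS"
      define R where "R = f' i0"
      define n where "n = real N"
      have R01: "0 \<le> R" "R \<le> 1" using fb' assms(7) by (auto simp: R_def)
      have e: "s / n - (R + s) / (n + 1) = (s - n * R) / (n * (n + 1))"
        using Npos by (simp add: n_def field_simps)
      have b1: "\<bar>s - n * R\<bar> \<le> n"
      proof -
        have "n * R \<le> n" using R01 Npos by (simp add: n_def mult_left_le)
        moreover have "0 \<le> n * R" using R01 Npos by (simp add: n_def)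
        ultimately show ?thesis using s0 s1 by (simp add: s_def n_def abs_le_iff)
      qed
      have "\<bar>(s - n * R) / (n * (n + 1))\<bar> = \<bar>s - n * R\<bar> / (n * (n + 1))"
        using Npos by (simp add: n_def abs_divide)
      also have "\<dots> \<le> n / (n * (n + 1))" using b1 Npos by (intro divide_right_mono) (auto simp: n_def)
      also have "\<dots> = 1 / (n + 1)" using Npos by (simp add: n_def)
      also have "\<dots> \<le> 1 / (real Nmin + 1)" using NN assms(2) by (simp add: n_def frac_le)
      finally have "\<bar>s / n - (R + s) / (n + 1)\<bar> \<le> 1 / (real Nmin + 1)" using e by simp
      then show ?thesis using cn sm by (simp add: s_def R_def n_def add.commute)
    next
      case False2: False
      have eq: "CS' = CS" using same False False2 by blast
      have "sum f' CS = sum f CS" by (rule sum.cong[OF refl], rule ff) (use False in blast)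
      moreover have "0 \<le> 1 / (real Nmin + 1)" by simp
      ultimately show ?thesis using eq by (simp add: N_def le_max_iff_disj)
    qed
  qed
  then show ?thesis using avg avg' by (simp add: C'_def B_def)
qed

end
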